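(* Let $d\ge 2$, let $P_1,\dots,P_d$ be matrix polynomials with $P_i(x_1,\dots,x_d)=\sum_{i_1=0}^{\tau_1}\cdots\sum_{i_d=0}^{\tau_d}P^{(i)}_{i_1,\dots,i_d}x_1^{i_1}\cdots x_d^{i_d}$, $P^{(i)}_{i_1,\dots,i_d}\in\mathbb{C}^{n_i\times n_i}$, and let $N=\prod_{i=1}^d n_i$. Suppose $(x_1^*,\dots,x_d^* )\in\mathbb{C}^d$ and nonzero $\mathbf{v}_i\in\mathbb{C}^{n_i}$ satisfy $P_i(x_1^*,\dots,x_d^* )\mathbf{v}_i=0$ for all $1\le i\le d$, and set $\mathbf{v}=\mathbf{v}_1\otimes\cdots\otimes\mathbf{v}_d$. Let $V$ be the block vector whose block indexed by $\mathbf{i}=(i_1,\dots,i_{d-1})$, $0\le i_k\le\alpha_k$ (ordered as the block columns of $R$), is $\prod_{k=1}^{d-1}(x_k^* )^{i_k}\mathbf{v}$. Then $V\neq 0$ and $R(x_d^* )V=0$, where $R(x_d)$ is the hidden variable tensor Dixon resultant; i.e. $x_d^*$ is an eigenvalue of $R(x_d)$ with eigenvector $V$.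
   Context: Kronecker block determinant: for a $d\times d$ array $M=(M_{ij})$ with $M_{ij}\in\mathbb{C}^{n_i\times n_i}$ (possibly depending polynomially on variables), $|M|_\otimes=\sum_{\sigma\in S_d}\mathrm{sgn}(\sigma)\,M_{1,\sigma(1)}\otimes\cdots\otimes M_{d,\sigma(d)}$, an $N\times N$ matrix. Tensor Dixon function (with $x_d$ hidden): with variables $s_1,\dots,s_{d-1},t_1,\dots,t_{d-1},x_d$, let $M_{ij}=P_i(t_1,\dots,t_{j-1},s_j,\dots,s_{d-1},x_d)$ for $1\le i,j\le d$, and $f_{\text{Dixon}}=|M|_\otimes/\prod_{i=1}^{d-1}(s_i-t_i)$, a matrix polynomial of degree at most $\alpha_i=i\tau_i-1$ in $s_i$ and at most $\beta_i=(d-i)\tau_i-1$ in $t_i$. Expand $f_{\text{Dixon}}=\sum_{\mathbf{i},\mathbf{j}}A_{\mathbf{i},\mathbf{j}}(x_d)\prod_k s_k^{i_k}\prod_k t_k^{j_k}$ over $0\le i_k\le\alpha_k$, $0\le j_k\le\beta_k$, with $A_{\mathbf{i},\mathbf{j}}(x_d)$ an $N\times N$ matrix polynomial in $x_d$. The hidden variable tensor Dixon resultant $R(x_d)$ is the square block matrix whose block columns (width $N$) are indexed by the $s$-exponents $\mathbf{i}$ and block rows (height $N$) by the $t$-exponents $\mathbf{j}$ (in fixed orderings), with block $(\mathbf{j},\mathbf{i})$ equal to $A_{\mathbf{i},\mathbf{j}}(x_d)$. *)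

theory Defs
  imports Complex_Main "HOL-Combinatorics.Combinatorics" "HOL-Library.FuncSet"
begin

text \<open>
A matrix polynomial P_i in d variables with matrix coefficients of size
n_i x n_i is given by its coefficient function Pc i :: (nat => nat) => nat => nat => complex,
where Pc i e a b is entry (a,b) (0-based, a,b < n_i) of the coefficient of
x_1^(e 1) ... x_d^(e d), for exponent vectors e with 0 <= e k <= tau k.
Points of C^d are functions x :: nat => complex using the entries x 1, ..., x d.
Rows/columns of an N x N Kronecker product (N = n_1 ... n_d) are indexed by
multi-indices r with r k < n k (k = 1..d); the entry of A_1 (x) ... (x) A_d at (r,c)
is the product of the entries A_k (r k, c k).
\<close>

definition exps :: "nat \<Rightarrow> (nat \<Rightarrow> nat) \<Rightarrow> (nat \<Rightarrow> nat) set" where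
  "exps d tau = (PiE {1..d} (\<lambda>k. {0..tau k}))"

definition mpoly_eval :: "nat \<Rightarrow> (nat \<Rightarrow> nat) \<Rightarrow> ((nat \<Rightarrow> nat) \<Rightarrow> nat \<Rightarrow> nat \<Rightarrow> complex)
    \<Rightarrow> (nat \<Rightarrow> complex) \<Rightarrow> nat \<Rightarrow> nat \<Rightarrow> complex" where
  "mpoly_eval d tau C x a b = (\<Sum>e\<in>exps d tau. C e a b * (\<Prod>k\<in>{1..d}. x k ^ e k))"

definition kidx :: "nat \<Rightarrow> (nat \<Rightarrow> nat) \<Rightarrow> (nat \<Rightarrow> nat) set" where
  "kidx d n = PiE {1..d} (\<lambda>k. {..<n k})"

definition ktensor_vec :: "nat \<Rightarrow> (nat \<Rightarrow> nat \<Rightarrow> complex) \<Rightarrow> (nat \<Rightarrow> nat) \<Rightarrow> complex" where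
  "ktensor_vec d v r = (\<Prod>k\<in>{1..d}. v k (r k))"

text \<open>argument (t_1,...,t_{j-1}, s_j, ..., s_{d-1}, x_d) of P_i in the entry M_ij\<close>
definition dixon_arg :: "nat \<Rightarrow> nat \<Rightarrow> (nat \<Rightarrow> complex) \<Rightarrow> (nat \<Rightarrow> complex) \<Rightarrow> complex
    \<Rightarrow> nat \<Rightarrow> complex" where
  "dixon_arg d j s t xd k = (if k < j then t k else if k < d then s k else xd)"

text \<open>entry (r,c) of the Kronecker block determinant |M|_(x) with
  M_ij = P_i(t_1,...,t_{j-1},s_j,...,s_{d-1},x_d)\<close>
definition tensor_det :: "nat \<Rightarrow> (nat \<Rightarrow> nat) \<Rightarrow> (nat \<Rightarrow> (nat \<Rightarrow> nat) \<Rightarrow> nat \<Rightarrow> nat \<Rightarrow> complex)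
    \<Rightarrow> (nat \<Rightarrow> complex) \<Rightarrow> (nat \<Rightarrow> complex) \<Rightarrow> complex \<Rightarrow> (nat \<Rightarrow> nat) \<Rightarrow> (nat \<Rightarrow> nat) \<Rightarrow> complex" where
  "tensor_det d tau Pc s t xd r c =
     (\<Sum>\<sigma>\<in>{\<sigma>. \<sigma> permutes {1..d}}. of_int (sign \<sigma>) *
        (\<Prod>i\<in>{1..d}. mpoly_eval d tau (Pc i) (dixon_arg d (\<sigma> i) s t xd) (r i) (c i)))"

text \<open>degree bounds alpha_k = k tau_k - 1, beta_k = (d-k) tau_k - 1 and the
  s-exponent (block column) and t-exponent (block row) index sets\<close>
definition s_exps :: "nat \<Rightarrow> (nat \<Rightarrow> nat) \<Rightarrow> (nat \<Rightarrow> nat) set" where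
  "s_exps d tau = PiE {1..d-1} (\<lambda>k. {0..k * tau k - 1})"

definition t_exps :: "nat \<Rightarrow> (nat \<Rightarrow> nat) \<Rightarrow> (nat \<Rightarrow> nat) set" where
  "t_exps d tau = PiE {1..d-1} (\<lambda>k. {0..(d - k) * tau k - 1})"

text \<open>The coefficients A_{i,j}(x_d) (entry (r,c)) of
  f_Dixon = |M|_(x) / prod_k (s_k - t_k) = sum_{i,j} A_{i,j}(x_d) s^i t^j,
  characterised (uniquely, by uniqueness of polynomial coefficients) by
  prod_k (s_k - t_k) * sum_{i,j} A_{i,j}(x_d) s^i t^j = |M|_(x) for all s, t.\<close>
definition dixon_coeffs :: "nat \<Rightarrow> (nat \<Rightarrow> nat) \<Rightarrow> (nat \<Rightarrow> nat)
    \<Rightarrow> (nat \<Rightarrow> (nat \<Rightarrow> nat) \<Rightarrow> nat \<Rightarrow> nat \<Rightarrow> complex) \<Rightarrow> complex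
    \<Rightarrow> (nat \<Rightarrow> nat) \<Rightarrow> (nat \<Rightarrow> nat) \<Rightarrow> (nat \<Rightarrow> nat) \<Rightarrow> (nat \<Rightarrow> nat) \<Rightarrow> complex" where
  "dixon_coeffs d tau n Pc xd = (SOME A. \<forall>s t. \<forall>r\<in>kidx d n. \<forall>c\<in>kidx d n.
      (\<Prod>k\<in>{1..d-1}. s k - t k) *
      (\<Sum>i\<in>s_exps d tau. \<Sum>j\<in>t_exps d tau.
          A i j r c * (\<Prod>k\<in>{1..d-1}. s k ^ i k) * (\<Prod>k\<in>{1..d-1}. t k ^ j k))
      = tensor_det d tau Pc s t xd r c)"

text \<open>Hidden variable tensor Dixon resultant R(x_d): block (j,i) (block row j in t_exps,
  block column i in s_exps) is A_{i,j}(x_d); entry ((j,r),(i,c)) is A_{i,j}(x_d)(r,c).\<close>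
definition dixon_resultant :: "nat \<Rightarrow> (nat \<Rightarrow> nat) \<Rightarrow> (nat \<Rightarrow> nat)
    \<Rightarrow> (nat \<Rightarrow> (nat \<Rightarrow> nat) \<Rightarrow> nat \<Rightarrow> nat \<Rightarrow> complex) \<Rightarrow> complex
    \<Rightarrow> ((nat \<Rightarrow> nat) \<times> (nat \<Rightarrow> nat)) \<Rightarrow> ((nat \<Rightarrow> nat) \<times> (nat \<Rightarrow> nat)) \<Rightarrow> complex" where
  "dixon_resultant d tau n Pc xd = (\<lambda>(j, r) (i, c). dixon_coeffs d tau n Pc xd i j r c)"

definition dixon_mult_vec :: "nat \<Rightarrow> (nat \<Rightarrow> nat) \<Rightarrow> (nat \<Rightarrow> nat)
    \<Rightarrow> (((nat \<Rightarrow> nat) \<times> (nat \<Rightarrow> nat)) \<Rightarrow> ((nat \<Rightarrow> nat) \<times> (nat \<Rightarrow> nat)) \<Rightarrow> complex)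
    \<Rightarrow> ((nat \<Rightarrow> nat) \<times> (nat \<Rightarrow> nat) \<Rightarrow> complex)
    \<Rightarrow> (nat \<Rightarrow> nat) \<times> (nat \<Rightarrow> nat) \<Rightarrow> complex" where
  "dixon_mult_vec d tau n Rm W = (\<lambda>jr. \<Sum>i\<in>s_exps d tau. \<Sum>c\<in>kidx d n. Rm jr (i, c) * W (i, c))"

end

theory Submission
  imports Defs "HOL-Computational_Algebra.Polynomial"
begin

definition box :: "nat set \<Rightarrow> (nat \<Rightarrow> nat) \<Rightarrow> (nat \<Rightarrow> nat) set" where
  "box K B = PiE K (\<lambda>k. {0..B k})"

definition P2 :: "nat set \<Rightarrow> (nat \<Rightarrow> nat) \<Rightarrow> (nat \<Rightarrow> nat) \<Rightarrow> ((nat \<Rightarrow> nat) \<Rightarrow> (nat \<Rightarrow> nat) \<Rightarrow> complex)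
   \<Rightarrow> (nat \<Rightarrow> complex) \<Rightarrow> (nat \<Rightarrow> complex) \<Rightarrow> complex" where
  "P2 K Bs Bt c s t = (\<Sum>i\<in>box K Bs. \<Sum>j\<in>box K Bt. c i j * (\<Prod>k\<in>K. s k ^ i k) * (\<Prod>k\<in>K. t k ^ j k))"

definition is2 :: "nat set \<Rightarrow> (nat \<Rightarrow> nat) \<Rightarrow> (nat \<Rightarrow> nat) \<Rightarrow> ((nat \<Rightarrow> complex) \<Rightarrow> (nat \<Rightarrow> complex) \<Rightarrow> complex) \<Rightarrow> bool" where
  "is2 K Bs Bt f \<longleftrightarrow> (\<exists>c. \<forall>s t. f s t = P2 K Bs Bt c s t)"

lemma finite_box: "finite K \<Longrightarrow> finite (box K B)"
  unfolding box_def by (intro finite_PiE) auto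

lemma is2_zero: "is2 K Bs Bt (\<lambda>s t. 0)"
  unfolding is2_def P2_def by (rule exI[of _ "\<lambda>i j. 0"]) simp

lemma is2_add:
  assumes "is2 K Bs Bt f" "is2 K Bs Bt g"
  shows "is2 K Bs Bt (\<lambda>s t. f s t + g s t)"
proof -
  obtain c1 where c1: "\<forall>s t. f s t = P2 K Bs Bt c1 s t" using assms(1) unfolding is2_def by blast
  obtain c2 where c2: "\<forall>s t. g s t = P2 K Bs Bt c2 s t" using assms(2) unfolding is2_def by blast
  show ?thesis unfolding is2_def
    by (rule exI[of _ "\<lambda>i j. c1 i j + c2 i j"])
       (simp add: c1 c2 P2_def distrib_right sum.distrib)
qed

lemma is2_smult:
  assumes "is2 K Bs Bt f"
  shows "is2 K Bs Bt (\<lambda>s t. a * f s t)"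
proof -
  obtain c1 where c1: "\<forall>s t. f s t = P2 K Bs Bt c1 s t" using assms(1) unfolding is2_def by blast
  show ?thesis unfolding is2_def
    by (rule exI[of _ "\<lambda>i j. a * c1 i j"])
       (simp add: c1 P2_def sum_distrib_left mult.assoc)
qed

lemma is2_cong: "is2 K Bs Bt f \<Longrightarrow> (\<And>s t. g s t = f s t) \<Longrightarrow> is2 K Bs Bt g"
  unfolding is2_def by metis

lemma is2_sum:
  assumes "finite X" "\<And>x. x \<in> X \<Longrightarrow> is2 K Bs Bt (f x)"
  shows "is2 K Bs Bt (\<lambda>s t. \<Sum>x\<in>X. f x s t)"
  using assms
proof (induction X rule: finite_induct)
  case empty
  then show ?case by (simp add: is2_zero)
next
  case (insert x F)
  then show ?case by (simp add: is2_add)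
qed

lemma is2_monomial:
  assumes "finite K" "i \<in> box K Bs" "j \<in> box K Bt"
  shows "is2 K Bs Bt (\<lambda>s t. a * (\<Prod>k\<in>K. s k ^ i k) * (\<Prod>k\<in>K. t k ^ j k))"
  unfolding is2_def P2_def
proof (rule exI[of _ "\<lambda>i' j'. if i' = i then if j' = j then a else 0 else 0"], intro allI)
  fix s t :: "nat \<Rightarrow> complex"
  have inner: "(\<Sum>j'\<in>box K Bt. (if i' = i then if j' = j then a else 0 else 0) *
          (\<Prod>k\<in>K. s k ^ i' k) * (\<Prod>k\<in>K. t k ^ j' k))
       = (if i' = i then a * (\<Prod>k\<in>K. s k ^ i k) * (\<Prod>k\<in>K. t k ^ j k) else 0)" for i'
  proof (cases "i' = i")
    case True
    have "(\<Sum>j'\<in>box K Bt. (if i' = i then if j' = j then a else 0 else 0) *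
          (\<Prod>k\<in>K. s k ^ i' k) * (\<Prod>k\<in>K. t k ^ j' k))
       = (\<Sum>j'\<in>box K Bt. if j' = j then a * (\<Prod>k\<in>K. s k ^ i k) * (\<Prod>k\<in>K. t k ^ j' k) else 0)"
      using True by (intro sum.cong) auto
    also have "\<dots> = a * (\<Prod>k\<in>K. s k ^ i k) * (\<Prod>k\<in>K. t k ^ j k)"
      using assms(1,3) by (simp add: sum.delta finite_box)
    finally show ?thesis using True by simp
  qed simp
  show "a * (\<Prod>k\<in>K. s k ^ i k) * (\<Prod>k\<in>K. t k ^ j k) = (\<Sum>i'\<in>box K Bs. \<Sum>j'\<in>box K Bt. (if i' = i then if j' = j then a else 0 else 0) *
          (\<Prod>k\<in>K. s k ^ i' k) * (\<Prod>k\<in>K. t k ^ j' k))"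
    unfolding inner using assms(1,2) by (simp add: sum.delta sum.delta' finite_box)
qed

lemma is2_expand:
  assumes "is2 K Bs Bt f"
  obtains c where "\<And>s t. f s t = (\<Sum>i\<in>box K Bs. \<Sum>j\<in>box K Bt. c i j * (\<Prod>k\<in>K. s k ^ i k) * (\<Prod>k\<in>K. t k ^ j k))"
  using assms unfolding is2_def P2_def by blast

lemma box_mono: "(\<And>k. k \<in> K \<Longrightarrow> B k \<le> B' k) \<Longrightarrow> box K B \<subseteq> box K B'"
  unfolding box_def by (rule PiE_mono) auto

lemma is2_mono:
  assumes "finite K" "is2 K Bs Bt f" "\<And>k. k \<in> K \<Longrightarrow> Bs k \<le> Bs' k" "\<And>k. k \<in> K \<Longrightarrow> Bt k \<le> Bt' k"
  shows "is2 K Bs' Bt' f"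
proof -
  obtain c where c: "\<And>s t. f s t = (\<Sum>i\<in>box K Bs. \<Sum>j\<in>box K Bt. c i j * (\<Prod>k\<in>K. s k ^ i k) * (\<Prod>k\<in>K. t k ^ j k))"
    using is2_expand[OF assms(2)] by blast
  show ?thesis
    apply (rule is2_cong[OF _ c])
    apply (rule is2_sum[OF finite_box[OF assms(1)]])
    apply (rule is2_sum[OF finite_box[OF assms(1)]])
    apply (rule is2_monomial[OF assms(1)])
    using box_mono[of K Bs Bs'] box_mono[of K Bt Bt'] assms(3,4) by auto
qed

lemma mono_mult:
  "(\<Prod>k\<in>K. s k ^ i1 k) * (\<Prod>k\<in>K. s k ^ i2 k) = (\<Prod>k\<in>K. (s::nat\<Rightarrow>complex) k ^ (restrict (\<lambda>k. i1 k + i2 k) K) k)"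
  by (simp add: prod.distrib[symmetric] power_add)

lemma box_add: "i1 \<in> box K B1 \<Longrightarrow> i2 \<in> box K B2 \<Longrightarrow> restrict (\<lambda>k. i1 k + i2 k) K \<in> box K (\<lambda>k. B1 k + B2 k)"
  unfolding box_def by (auto simp: PiE_iff add_mono)

lemma is2_mult:
  assumes "finite K" "is2 K Bs1 Bt1 f" "is2 K Bs2 Bt2 g"
  shows "is2 K (\<lambda>k. Bs1 k + Bs2 k) (\<lambda>k. Bt1 k + Bt2 k) (\<lambda>s t. f s t * g s t)"
proof -
  obtain c1 where c1: "\<And>s t. f s t = (\<Sum>i\<in>box K Bs1. \<Sum>j\<in>box K Bt1. c1 i j * (\<Prod>k\<in>K. s k ^ i k) * (\<Prod>k\<in>K. t k ^ j k))"
    using is2_expand[OF assms(2)] by blast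
  obtain c2 where c2: "\<And>s t. g s t = (\<Sum>i\<in>box K Bs2. \<Sum>j\<in>box K Bt2. c2 i j * (\<Prod>k\<in>K. s k ^ i k) * (\<Prod>k\<in>K. t k ^ j k))"
    using is2_expand[OF assms(3)] by blast
  have fin: "finite (box K B)" for B using finite_box[OF assms(1)] .
  have eq: "f s t * g s t = (\<Sum>i1\<in>box K Bs1. \<Sum>i2\<in>box K Bs2. \<Sum>j1\<in>box K Bt1. \<Sum>j2\<in>box K Bt2.
     (c1 i1 j1 * c2 i2 j2) * (\<Prod>k\<in>K. s k ^ (restrict (\<lambda>k. i1 k + i2 k) K) k) * (\<Prod>k\<in>K. t k ^ (restrict (\<lambda>k. j1 k + j2 k) K) k))" for s t
    unfolding c1 c2 sum_product
    by (intro sum.cong refl) (simp add: power_add prod.distrib mult_ac)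
  show ?thesis
    apply (rule is2_cong[OF _ eq])
    apply (intro is2_sum fin)
    apply (rule is2_monomial[OF assms(1)])
    by (blast intro: box_add)+
qed

lemma is2_one: "finite K \<Longrightarrow> is2 K (\<lambda>k. 0) (\<lambda>k. 0) (\<lambda>s t. 1)"
proof -
  have "restrict (\<lambda>k. 0) K \<in> box K (\<lambda>k. 0)" unfolding box_def by auto
  assume "finite K"
  from is2_monomial[OF this \<open>restrict (\<lambda>k. 0) K \<in> box K (\<lambda>k. 0)\<close> \<open>restrict (\<lambda>k. 0) K \<in> box K (\<lambda>k. 0)\<close>, of 1] show ?thesis by simp
qed

lemma is2_prod:
  assumes "finite K" "finite X" "\<And>x. x \<in> X \<Longrightarrow> is2 K (Bs x) (Bt x) (f x)"
  shows "is2 K (\<lambda>k. \<Sum>x\<in>X. Bs x k) (\<lambda>k. \<Sum>x\<in>X. Bt x k) (\<lambda>s t. \<Prod>x\<in>X. f x s t)"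
  using assms(2,3)
proof (induction X rule: finite_induct)
  case empty
  then show ?case by (simp add: is2_one assms(1))
next
  case (insert x F)
  then show ?case by (simp add: is2_mult[OF assms(1)])
qed


lemma uni_ident:
  fixes c :: "nat \<Rightarrow> complex"
  assumes "infinite A" "\<And>z. z \<in> A \<Longrightarrow> (\<Sum>y\<in>{0..m}. c y * z ^ y) = 0"
  shows "\<forall>y\<in>{0..m}. c y = 0"
proof -
  define p where "p = (\<Sum>y\<in>{0..m}. monom (c y) y)"
  have pz: "poly p z = (\<Sum>y\<in>{0..m}. c y * z ^ y)" for z
    unfolding p_def by (simp add: poly_sum poly_monom)
  have "p = 0"
  proof (rule ccontr)
    assume "p \<noteq> 0"
    then have "finite {z. poly p z = 0}" by (rule poly_roots_finite)
    moreover have "A \<subseteq> {z. poly p z = 0}" using assms(2) pz by auto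
    ultimately show False using assms(1) finite_subset by blast
  qed
  show ?thesis
  proof
    fix y assume y: "y \<in> {0..m}"
    have "coeff p y = c y" unfolding p_def coeff_sum coeff_monom
      using y by (simp add: sum.delta')
    then show "c y = 0" using \<open>p = 0\<close> by simp
  qed
qed

lemma ident1:
  fixes c :: "(nat \<Rightarrow> nat) \<Rightarrow> complex"
  assumes "finite K" "\<And>k. k \<in> K \<Longrightarrow> infinite (A k)"
    "\<And>x. (\<And>k. k \<in> K \<Longrightarrow> x k \<in> A k) \<Longrightarrow> (\<Sum>e\<in>box K B. c e * (\<Prod>k\<in>K. x k ^ e k)) = 0"
  shows "\<forall>e\<in>box K B. c e = 0"
  using assms
proof (induction K arbitrary: c rule: finite_induct)
  case empty
  have "(\<Sum>e\<in>box {} B. c e * (\<Prod>k\<in>{}. (undefined::nat\<Rightarrow>complex) k ^ e k)) = 0"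
    by (rule empty.prems(2)) auto
  then show ?case by (simp add: box_def)
next
  case (insert a K)
  let ?S = "{0..B a} \<times> box K B"
  let ?h = "\<lambda>(y, g). g(a := y)"
  have beq: "box (insert a K) B = ?h ` ?S" unfolding box_def by (rule PiE_insert_eq)
  have inj: "inj_on ?h ?S" unfolding box_def by (rule inj_combinator) (use insert in auto)
  have split: "(\<Sum>e\<in>box (insert a K) B. c e * (\<Prod>k\<in>insert a K. x k ^ e k))
     = (\<Sum>g\<in>box K B. (\<Sum>y\<in>{0..B a}. c (g(a := y)) * x a ^ y) * (\<Prod>k\<in>K. x k ^ g k))" for x
  proof -
    have "(\<Sum>e\<in>box (insert a K) B. c e * (\<Prod>k\<in>insert a K. x k ^ e k))
        = (\<Sum>p\<in>?S. c (?h p) * (\<Prod>k\<in>insert a K. x k ^ (?h p) k))"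
      unfolding beq by (rule sum.reindex[OF inj, unfolded comp_def])
    also have "\<dots> = (\<Sum>(y,g)\<in>?S. c (g(a := y)) * (x a ^ y * (\<Prod>k\<in>K. x k ^ g k)))"
    proof (intro sum.cong refl, clarify)
      fix y g
      have "(\<Prod>k\<in>K. x k ^ (g(a := y)) k) = (\<Prod>k\<in>K. x k ^ g k)"
        by (rule prod.cong) (use insert in auto)
      then show "c (g(a := y)) * (\<Prod>k\<in>insert a K. x k ^ (g(a := y)) k) =
          c (g(a := y)) * (x a ^ y * (\<Prod>k\<in>K. x k ^ g k))"
        using insert by simp
    qed
    also have "\<dots> = (\<Sum>y\<in>{0..B a}. \<Sum>g\<in>box K B. c (g(a := y)) * (x a ^ y * (\<Prod>k\<in>K. x k ^ g k)))"
      by (rule sum.cartesian_product[symmetric])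
    also have "\<dots> = (\<Sum>g\<in>box K B. (\<Sum>y\<in>{0..B a}. c (g(a := y)) * x a ^ y) * (\<Prod>k\<in>K. x k ^ g k))"
      by (subst sum.swap) (simp add: sum_distrib_right mult.assoc)
    finally show ?thesis .
  qed
  have step: "\<forall>g\<in>box K B. (\<Sum>y\<in>{0..B a}. c (g(a := y)) * z ^ y) = 0" if z: "z \<in> A a" for z
  proof (rule insert.IH)
    show "\<And>k. k \<in> K \<Longrightarrow> infinite (A k)" using insert by auto
    fix x assume x: "\<And>k. k \<in> K \<Longrightarrow> x k \<in> A k"
    have "(\<Sum>e\<in>box (insert a K) B. c e * (\<Prod>k\<in>insert a K. (x(a := z)) k ^ e k)) = 0"
      by (rule insert.prems(2)) (use x z insert.hyps in auto)
    then have "(\<Sum>g\<in>box K B. (\<Sum>y\<in>{0..B a}. c (g(a := y)) * z ^ y) * (\<Prod>k\<in>K. (x(a := z)) k ^ g k)) = 0"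
      unfolding split by simp
    moreover have "(\<Prod>k\<in>K. (x(a := z)) k ^ g k) = (\<Prod>k\<in>K. x k ^ g k)" for g
      by (rule prod.cong) (use insert.hyps in auto)
    ultimately show "(\<Sum>g\<in>box K B. (\<Sum>y\<in>{0..B a}. c (g(a := y)) * z ^ y) * (\<Prod>k\<in>K. x k ^ g k)) = 0"
      by simp
  qed
  have zero: "c (g(a := y)) = 0" if "g \<in> box K B" "y \<in> {0..B a}" for g y
    using uni_ident[of "A a" "\<lambda>y. c (g(a := y))" "B a"] step that insert.prems(1) by auto
  show ?case
  proof
    fix e assume "e \<in> box (insert a K) B"
    then obtain y g where "y \<in> {0..B a}" "g \<in> box K B" "e = g(a := y)" unfolding beq by auto
    then show "c e = 0" using zero by simp
  qed
qed

lemma ident2: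
  assumes "finite K" "\<And>k. k \<in> K \<Longrightarrow> infinite (As k)" "\<And>k. k \<in> K \<Longrightarrow> infinite (At k)"
    "\<And>s t. (\<And>k. k \<in> K \<Longrightarrow> s k \<in> As k) \<Longrightarrow> (\<And>k. k \<in> K \<Longrightarrow> t k \<in> At k) \<Longrightarrow> P2 K Bs Bt c s t = 0"
  shows "\<forall>i\<in>box K Bs. \<forall>j\<in>box K Bt. c i j = 0"
proof -
  have A: "\<forall>j\<in>box K Bt. (\<Sum>i\<in>box K Bs. c i j * (\<Prod>k\<in>K. s k ^ i k)) = 0"
    if s: "\<And>k. k \<in> K \<Longrightarrow> s k \<in> As k" for s
  proof (rule ident1[OF assms(1) assms(3)])
    fix t assume t: "\<And>k. k \<in> K \<Longrightarrow> t k \<in> At k"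
    have "P2 K Bs Bt c s t = 0" using assms(4)[OF s t] by blast
    then show "(\<Sum>j\<in>box K Bt. (\<Sum>i\<in>box K Bs. c i j * (\<Prod>k\<in>K. s k ^ i k)) * (\<Prod>k\<in>K. t k ^ j k)) = 0"
      unfolding P2_def by (subst (asm) sum.swap) (simp add: sum_distrib_right)
  qed
  show ?thesis
  proof (intro ballI)
    fix i j assume i: "i \<in> box K Bs" and j: "j \<in> box K Bt"
    have "\<forall>i\<in>box K Bs. c i j = 0"
    proof (rule ident1[OF assms(1) assms(2), of _ "\<lambda>i. c i j"])
      fix x assume "\<And>k. k \<in> K \<Longrightarrow> x k \<in> As k"
      from A[OF this] j show "(\<Sum>i\<in>box K Bs. c i j * (\<Prod>k\<in>K. x k ^ i k)) = 0" by blast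
    qed auto
    then show "c i j = 0" using i by blast
  qed
qed


definition Dt :: "nat set \<Rightarrow> (nat \<Rightarrow> nat \<Rightarrow> complex) \<Rightarrow> complex" where
  "Dt S m = (\<Sum>\<sigma>\<in>{\<sigma>. \<sigma> permutes S}. of_int (sign \<sigma>) * (\<Prod>i\<in>S. m i (\<sigma> i)))"

lemma Dt_cong: "(\<And>i l. i \<in> S \<Longrightarrow> l \<in> S \<Longrightarrow> m i l = m' i l) \<Longrightarrow> Dt S m = Dt S m'"
  unfolding Dt_def
  by (intro sum.cong refl arg_cong2[where f="(*)"] prod.cong) (auto simp: permutes_in_image)

lemma Dt_linear:
  assumes "finite S" "j \<in> S"
    "\<And>i l. i \<in> S \<Longrightarrow> l \<in> S \<Longrightarrow> l \<noteq> j \<Longrightarrow> m1 i l = m i l \<and> m2 i l = m i l"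
    "\<And>i. i \<in> S \<Longrightarrow> m i j = m1 i j - m2 i j"
  shows "Dt S m = Dt S m1 - Dt S m2"
proof -
  have per: "(\<Prod>i\<in>S. m i (\<sigma> i)) = (\<Prod>i\<in>S. m1 i (\<sigma> i)) - (\<Prod>i\<in>S. m2 i (\<sigma> i))"
    if p: "\<sigma> permutes S" for \<sigma>
  proof -
    define i0 where "i0 = inv \<sigma> j"
    have i0S: "i0 \<in> S" unfolding i0_def using permutes_in_image[OF permutes_inv[OF p]] assms(2) by simp
    have si0: "\<sigma> i0 = j" unfolding i0_def using permutes_inverses[OF p] by simp
    have other: "\<sigma> i \<noteq> j" if "i \<in> S - {i0}" for i
      using that si0 permutes_inj[OF p] by (auto dest: injD)
    have R: "(\<Prod>i\<in>S - {i0}. m1 i (\<sigma> i)) = (\<Prod>i\<in>S - {i0}. m i (\<sigma> i))"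
            "(\<Prod>i\<in>S - {i0}. m2 i (\<sigma> i)) = (\<Prod>i\<in>S - {i0}. m i (\<sigma> i))"
      using assms(3) other permutes_in_image[OF p] by (auto intro!: prod.cong)
    show ?thesis
      using prod.remove[OF assms(1) i0S, of "\<lambda>i. m i (\<sigma> i)"]
        prod.remove[OF assms(1) i0S, of "\<lambda>i. m1 i (\<sigma> i)"]
        prod.remove[OF assms(1) i0S, of "\<lambda>i. m2 i (\<sigma> i)"]
      using R si0 assms(4)[OF i0S] by (simp add: algebra_simps)
  qed
  show ?thesis unfolding Dt_def
    by (simp add: per right_diff_distrib sum_subtractf)
qed

lemma Dt_alt:
  assumes "finite S" "a \<in> S" "b \<in> S" "a \<noteq> b" "\<And>i. i \<in> S \<Longrightarrow> m i a = m i b"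
  shows "Dt S m = 0"
proof -
  let ?t = "transpose a b"
  have tp: "?t permutes S" by (rule permutes_swap_id[OF assms(2,3)])
  let ?f = "\<lambda>\<sigma>. of_int (sign \<sigma>) * (\<Prod>i\<in>S. m i (\<sigma> i))"
  have "Dt S m = (\<Sum>\<sigma>\<in>{\<sigma>. \<sigma> permutes S}. ?f (?t \<circ> \<sigma>))"
    unfolding Dt_def by (rule setum_permutations_compose_left[OF tp])
  also have "\<dots> = (\<Sum>\<sigma>\<in>{\<sigma>. \<sigma> permutes S}. - ?f \<sigma>)"
  proof (intro sum.cong refl)
    fix \<sigma> assume "\<sigma> \<in> {\<sigma>. \<sigma> permutes S}"
    then have p: "\<sigma> permutes S" by simp
    have "sign (?t \<circ> \<sigma>) = sign ?t * sign \<sigma>"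
      by (rule sign_compose[OF permutation_swap_id permutes_imp_permutation[OF assms(1) p]])
    also have "\<dots> = - sign \<sigma>" using assms(4) by (simp add: sign_swap_id)
    finally have sg: "sign (?t \<circ> \<sigma>) = - sign \<sigma>" .
    have "(\<Prod>i\<in>S. m i ((?t \<circ> \<sigma>) i)) = (\<Prod>i\<in>S. m i (\<sigma> i))"
    proof (rule prod.cong[OF refl])
      fix i assume i: "i \<in> S"
      show "m i ((?t \<circ> \<sigma>) i) = m i (\<sigma> i)"
        using assms(5)[OF i] by (cases "\<sigma> i = a"; cases "\<sigma> i = b") (simp_all add: transpose_def)
    qed
    then show "?f (?t \<circ> \<sigma>) = - ?f \<sigma>" using sg by simp
  qed
  also have "\<dots> = - Dt S m" unfolding Dt_def by (simp add: sum_negf)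
  finally show ?thesis by simp
qed

lemma Dt_colop:
  assumes "finite S" "j \<in> S" "j' \<in> S" "j \<noteq> j'"
  shows "Dt S (\<lambda>i l. if l = j then m i j - m i j' else m i l) = Dt S m"
proof -
  have "Dt S (\<lambda>i l. if l = j then m i j - m i j' else m i l) = Dt S m - Dt S (\<lambda>i l. if l = j then m i j' else m i l)"
    by (rule Dt_linear[OF assms(1,2)]) auto
  moreover have "Dt S (\<lambda>i l. if l = j then m i j' else m i l) = 0"
    by (rule Dt_alt[OF assms(1,2,3,4)]) (use assms(4) in auto)
  ultimately show ?thesis by simp
qed

lemma Dt_scale:
  assumes "finite S" "\<And>i l. i \<in> S \<Longrightarrow> l \<in> S \<Longrightarrow> m i l = w l * q i l"
  shows "Dt S m = (\<Prod>l\<in>S. w l) * Dt S q"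
proof -
  have per: "(\<Prod>i\<in>S. m i (\<sigma> i)) = (\<Prod>l\<in>S. w l) * (\<Prod>i\<in>S. q i (\<sigma> i))"
    if p: "\<sigma> permutes S" for \<sigma>
  proof -
    have "(\<Prod>i\<in>S. m i (\<sigma> i)) = (\<Prod>i\<in>S. w (\<sigma> i) * q i (\<sigma> i))"
      using assms(2) permutes_in_image[OF p] by (auto intro!: prod.cong)
    also have "\<dots> = (\<Prod>i\<in>S. w (\<sigma> i)) * (\<Prod>i\<in>S. q i (\<sigma> i))" by (rule prod.distrib)
    also have "(\<Prod>i\<in>S. w (\<sigma> i)) = (\<Prod>l\<in>S. w l)"
      using prod.permute[OF p, of w] by (simp add: comp_def)
    finally show ?thesis .
  qed
  show ?thesis unfolding Dt_def
    by (simp add: per sum_distrib_left mult_ac)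
qed


definition Ev :: "nat \<Rightarrow> (nat \<Rightarrow> nat) \<Rightarrow> complex \<Rightarrow> ((nat \<Rightarrow> nat) \<Rightarrow> complex) \<Rightarrow> nat
   \<Rightarrow> (nat \<Rightarrow> complex) \<Rightarrow> (nat \<Rightarrow> complex) \<Rightarrow> complex" where
  "Ev d tau xd C j s t = (\<Sum>e\<in>exps d tau. C e * (\<Prod>k\<in>{1..d}. dixon_arg d j s t xd k ^ e k))"

definition Qv :: "nat \<Rightarrow> (nat \<Rightarrow> nat) \<Rightarrow> complex \<Rightarrow> ((nat \<Rightarrow> nat) \<Rightarrow> complex) \<Rightarrow> nat
   \<Rightarrow> (nat \<Rightarrow> complex) \<Rightarrow> (nat \<Rightarrow> complex) \<Rightarrow> complex" where
  "Qv d tau xd C j s t = (\<Sum>e\<in>exps d tau. C e * ((\<Sum>a<e j. t j ^ (e j - Suc a) * s j ^ a) *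
       (\<Prod>k\<in>{1..d} - {j}. dixon_arg d j s t xd k ^ e k)))"

lemma prod_top_split: "1 \<le> (d::nat) \<Longrightarrow> prod f {1..d} = f d * prod f {1..d-1}"
proof -
  assume "1 \<le> d"
  then have "{1..d} = insert d {1..d-1}" by (auto; arith)
  then show ?thesis using \<open>1 \<le> d\<close> by simp
qed

lemma Ev_diff:
  assumes "1 \<le> j" "j < d"
  shows "Ev d tau xd C j s t - Ev d tau xd C (Suc j) s t = (s j - t j) * Qv d tau xd C j s t"
proof -
  have jS: "j \<in> {1..d}" using assms by auto
  have per: "(\<Prod>k\<in>{1..d}. dixon_arg d j s t xd k ^ e k) - (\<Prod>k\<in>{1..d}. dixon_arg d (Suc j) s t xd k ^ e k)
     = (s j - t j) * ((\<Sum>a<e j. t j ^ (e j - Suc a) * s j ^ a) *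
       (\<Prod>k\<in>{1..d} - {j}. dixon_arg d j s t xd k ^ e k))" for e
  proof -
    have R: "(\<Prod>k\<in>{1..d} - {j}. dixon_arg d (Suc j) s t xd k ^ e k) = (\<Prod>k\<in>{1..d} - {j}. dixon_arg d j s t xd k ^ e k)"
      by (rule prod.cong) (auto simp: dixon_arg_def)
    have a1: "dixon_arg d j s t xd j = s j" "dixon_arg d (Suc j) s t xd j = t j"
      using assms by (auto simp: dixon_arg_def)
    have pd: "s j ^ e j - t j ^ e j = (s j - t j) * (\<Sum>a<e j. t j ^ (e j - Suc a) * s j ^ a)"
      by (rule power_diff_sumr2)
    show ?thesis
      unfolding prod.remove[OF finite_atLeastAtMost jS, of "\<lambda>k. dixon_arg d j s t xd k ^ e k"]
        prod.remove[OF finite_atLeastAtMost jS, of "\<lambda>k. dixon_arg d (Suc j) s t xd k ^ e k"] R a1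
      by (simp only: left_diff_distrib[symmetric] pd mult.assoc)
  qed
  have "Ev d tau xd C j s t - Ev d tau xd C (Suc j) s t = (\<Sum>e\<in>exps d tau. C e *
     ((\<Prod>k\<in>{1..d}. dixon_arg d j s t xd k ^ e k) - (\<Prod>k\<in>{1..d}. dixon_arg d (Suc j) s t xd k ^ e k)))"
    unfolding Ev_def by (simp only: sum_subtractf[symmetric] right_diff_distrib)
  also have "\<dots> = (\<Sum>e\<in>exps d tau. (s j - t j) * (C e * ((\<Sum>a<e j. t j ^ (e j - Suc a) * s j ^ a) *
       (\<Prod>k\<in>{1..d} - {j}. dixon_arg d j s t xd k ^ e k))))"
    unfolding per by (simp only: mult.left_commute)
  also have "\<dots> = (s j - t j) * Qv d tau xd C j s t"
    unfolding Qv_def by (simp only: sum_distrib_left)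
  finally show ?thesis .
qed

definition BsE :: "(nat \<Rightarrow> nat) \<Rightarrow> nat \<Rightarrow> nat \<Rightarrow> nat" where
  "BsE tau j k = (if j \<le> k then tau k else 0)"
definition BtE :: "(nat \<Rightarrow> nat) \<Rightarrow> nat \<Rightarrow> nat \<Rightarrow> nat" where
  "BtE tau j k = (if k < j then tau k else 0)"
definition BsQ :: "(nat \<Rightarrow> nat) \<Rightarrow> nat \<Rightarrow> nat \<Rightarrow> nat" where
  "BsQ tau j k = (if j < k then tau k else if k = j then tau k - 1 else 0)"
definition BtQ :: "(nat \<Rightarrow> nat) \<Rightarrow> nat \<Rightarrow> nat \<Rightarrow> nat" where
  "BtQ tau j k = (if k < j then tau k else if k = j then tau k - 1 else 0)"

lemma exps_le: "e \<in> exps d tau \<Longrightarrow> k \<in> {1..d} \<Longrightarrow> e k \<le> tau k"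
  unfolding exps_def by (auto simp: PiE_iff)

lemma finite_exps: "finite (exps d tau)"
  unfolding exps_def by (intro finite_PiE) auto

lemma Ev_is2:
  assumes "1 \<le> j" "j \<le> d"
  shows "is2 {1..d-1} (BsE tau j) (BtE tau j) (Ev d tau xd C j)"
proof -
  let ?K = "{1..d-1}"
  define ie where "ie e = restrict (\<lambda>k. if j \<le> k then e k else 0) ?K" for e :: "nat \<Rightarrow> nat"
  define je where "je e = restrict (\<lambda>k. if k < j then e k else 0) ?K" for e :: "nat \<Rightarrow> nat"
  have trm: "(\<Prod>k\<in>{1..d}. dixon_arg d j s t xd k ^ e k)
     = xd ^ e d * (\<Prod>k\<in>?K. s k ^ ie e k) * (\<Prod>k\<in>?K. t k ^ je e k)" for s t e
  proof -
    have "(\<Prod>k\<in>?K. dixon_arg d j s t xd k ^ e k) = (\<Prod>k\<in>?K. s k ^ ie e k * t k ^ je e k)"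
      by (rule prod.cong) (auto simp: dixon_arg_def ie_def je_def)
    moreover have "dixon_arg d j s t xd d = xd" using assms by (simp add: dixon_arg_def)
    ultimately show ?thesis
      using prod_top_split[of d "\<lambda>k. dixon_arg d j s t xd k ^ e k"] assms
      by (simp add: prod.distrib mult.assoc)
  qed
  have eq: "Ev d tau xd C j s t = (\<Sum>e\<in>exps d tau. (C e * xd ^ e d) * (\<Prod>k\<in>?K. s k ^ ie e k) * (\<Prod>k\<in>?K. t k ^ je e k))" for s t
    unfolding Ev_def trm by (simp add: mult.assoc)
  show ?thesis
    apply (rule is2_cong[OF _ eq])
    apply (rule is2_sum[OF finite_exps])
    apply (rule is2_monomial)
    using exps_le[of _ d tau] assms
    by (auto simp: box_def ie_def je_def BsE_def BtE_def PiE_iff extensional_def)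
qed

lemma Qv_is2:
  assumes "1 \<le> j" "j < d"
  shows "is2 {1..d-1} (BsQ tau j) (BtQ tau j) (Qv d tau xd C j)"
proof -
  let ?K = "{1..d-1}"
  define iq where "iq e a = restrict (\<lambda>k. if k = j then a else if j \<le> k then e k else 0) ?K" for e :: "nat \<Rightarrow> nat" and a
  define jq where "jq e a = restrict (\<lambda>k. if k = j then e j - Suc a else if k < j then e k else 0) ?K" for e :: "nat \<Rightarrow> nat" and a
  have jK: "j \<in> ?K" using assms by auto
  have trm: "t j ^ (e j - Suc a) * s j ^ a * (\<Prod>k\<in>{1..d} - {j}. dixon_arg d j s t xd k ^ e k)
     = xd ^ e d * (\<Prod>k\<in>?K. s k ^ iq e a k) * (\<Prod>k\<in>?K. t k ^ jq e a k)" for s t e a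
  proof -
    have S: "{1..d} - {j} = insert d (?K - {j})" using assms by auto
    have "(\<Prod>k\<in>?K - {j}. dixon_arg d j s t xd k ^ e k) = (\<Prod>k\<in>?K - {j}. s k ^ iq e a k * t k ^ jq e a k)"
      by (rule prod.cong) (auto simp: dixon_arg_def iq_def jq_def)
    moreover have "dixon_arg d j s t xd d = xd" using assms by (simp add: dixon_arg_def)
    moreover have "(\<Prod>k\<in>?K. s k ^ iq e a k * t k ^ jq e a k) =
       (s j ^ a * t j ^ (e j - Suc a)) * (\<Prod>k\<in>?K - {j}. s k ^ iq e a k * t k ^ jq e a k)"
      using prod.remove[OF finite_atLeastAtMost jK, of "\<lambda>k. s k ^ iq e a k * t k ^ jq e a k"] jK
      by (simp add: iq_def jq_def)
    moreover have "(\<Prod>k\<in>insert d (?K - {j}). dixon_arg d j s t xd k ^ e k)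
       = dixon_arg d j s t xd d ^ e d * (\<Prod>k\<in>?K - {j}. dixon_arg d j s t xd k ^ e k)"
      by (rule prod.insert) auto
    moreover have "(\<Prod>k\<in>?K. s k ^ iq e a k) * (\<Prod>k\<in>?K. t k ^ jq e a k) = (\<Prod>k\<in>?K. s k ^ iq e a k * t k ^ jq e a k)"
      by (rule prod.distrib[symmetric])
    ultimately show ?thesis unfolding S
      by (simp only: mult_ac)
  qed
  have eq: "Qv d tau xd C j s t = (\<Sum>e\<in>exps d tau. \<Sum>a\<in>{..<e j}. (C e * xd ^ e d) * (\<Prod>k\<in>?K. s k ^ iq e a k) * (\<Prod>k\<in>?K. t k ^ jq e a k))" for s t
    unfolding Qv_def
  proof (intro sum.cong refl)
    fix e
    have "C e * ((\<Sum>a<e j. t j ^ (e j - Suc a) * s j ^ a) * (\<Prod>k\<in>{1..d} - {j}. dixon_arg d j s t xd k ^ e k))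
       = (\<Sum>a<e j. C e * (t j ^ (e j - Suc a) * s j ^ a * (\<Prod>k\<in>{1..d} - {j}. dixon_arg d j s t xd k ^ e k)))"
      by (simp add: sum_distrib_left sum_distrib_right)
    also have "\<dots> = (\<Sum>a<e j. (C e * xd ^ e d) * (\<Prod>k\<in>?K. s k ^ iq e a k) * (\<Prod>k\<in>?K. t k ^ jq e a k))"
      unfolding trm by (simp add: mult.assoc)
    finally show "C e * ((\<Sum>a<e j. t j ^ (e j - Suc a) * s j ^ a) * (\<Prod>k\<in>{1..d} - {j}. dixon_arg d j s t xd k ^ e k))
       = (\<Sum>a<e j. (C e * xd ^ e d) * (\<Prod>k\<in>?K. s k ^ iq e a k) * (\<Prod>k\<in>?K. t k ^ jq e a k))" .
  qed
  have b1: "iq e a \<in> box ?K (BsQ tau j)" if "e \<in> exps d tau" "a < e j" for e a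
  proof -
    have "e k \<le> tau k" if "k \<in> ?K" for k using exps_le[OF \<open>e \<in> exps d tau\<close>, of k] that by auto
    moreover have "e j \<le> tau j" using exps_le[OF \<open>e \<in> exps d tau\<close>, of j] assms by auto
    then have "a \<le> tau j - 1" using that(2) by linarith
    ultimately show ?thesis using that(2) jK unfolding box_def iq_def BsQ_def
      by (intro PiE_I) auto
  qed
  have b2: "jq e a \<in> box ?K (BtQ tau j)" if "e \<in> exps d tau" "a < e j" for e a
  proof -
    have "e k \<le> tau k" if "k \<in> ?K" for k using exps_le[OF \<open>e \<in> exps d tau\<close>, of k] that by auto
    moreover have "e j \<le> tau j" using exps_le[OF \<open>e \<in> exps d tau\<close>, of j] assms by auto
    then have "e j - Suc a \<le> tau j - 1" using that(2) by linarith
    ultimately show ?thesis using that(2) jK unfolding box_def jq_def BtQ_def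
      by (intro PiE_I) auto
  qed
  show ?thesis
    apply (rule is2_cong[OF _ eq])
    apply (rule is2_sum[OF finite_exps])
    apply (rule is2_sum, simp)
    apply (rule is2_monomial)
    using b1 b2 by auto
qed


lemma Dt_is2:
  assumes "finite K" "finite S" "\<And>i l. i \<in> S \<Longrightarrow> l \<in> S \<Longrightarrow> is2 K (Bs l) (Bt l) (q i l)"
  shows "is2 K (\<lambda>k. \<Sum>l\<in>S. Bs l k) (\<lambda>k. \<Sum>l\<in>S. Bt l k) (\<lambda>s t. Dt S (\<lambda>i l. q i l s t))"
  unfolding Dt_def
proof (rule is2_sum)
  show "finite {\<sigma>. \<sigma> permutes S}" using finite_permutations[OF assms(2)] .
  fix \<sigma> assume "\<sigma> \<in> {\<sigma>. \<sigma> permutes S}"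
  then have p: "\<sigma> permutes S" by simp
  have eqs: "(\<Sum>l\<in>S. B l k) = (\<Sum>i\<in>S. B (\<sigma> i) k)" for B :: "nat \<Rightarrow> nat \<Rightarrow> nat" and k
    using sum.permute[OF p, of "\<lambda>l. B l k"] by (simp add: comp_def)
  have "is2 K (\<lambda>k. \<Sum>i\<in>S. Bs (\<sigma> i) k) (\<lambda>k. \<Sum>i\<in>S. Bt (\<sigma> i) k) (\<lambda>s t. \<Prod>i\<in>S. q i (\<sigma> i) s t)"
    by (rule is2_prod[OF assms(1,2)]) (use assms(3) permutes_in_image[OF p] in auto)
  then show "is2 K (\<lambda>k. \<Sum>l\<in>S. Bs l k) (\<lambda>k. \<Sum>l\<in>S. Bt l k)
      (\<lambda>s t. of_int (sign \<sigma>) * (\<Prod>i\<in>S. q i (\<sigma> i) s t))"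
    unfolding eqs by (rule is2_smult)
qed

lemma sumA:
  "1 \<le> k \<Longrightarrow> k \<le> m \<Longrightarrow> (\<Sum>l\<in>{1..m}. BsQ tau l k) = (k - 1) * tau k + (tau k - 1)"
proof (induction m)
  case 0
  then show ?case by simp
next
  case (Suc m)
  show ?case
  proof (cases "k = Suc m")
    case True
    have "(\<Sum>l\<in>{1..m}. BsQ tau l k) = (\<Sum>l\<in>{1..m}. tau k)"
      by (rule sum.cong) (use True in \<open>auto simp: BsQ_def\<close>)
    then show ?thesis using True by (simp add: BsQ_def)
  next
    case False
    then have "k \<le> m" using Suc by simp
    then show ?thesis using Suc by (simp add: BsQ_def)
  qed
qed

lemma sumB:
  "1 \<le> k \<Longrightarrow> k \<le> m \<Longrightarrow> (\<Sum>l\<in>{1..m}. BtQ tau l k) = (m - k) * tau k + (tau k - 1)"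
proof (induction m)
  case 0
  then show ?case by simp
next
  case (Suc m)
  show ?case
  proof (cases "k = Suc m")
    case True
    have "(\<Sum>l\<in>{1..m}. BtQ tau l k) = 0"
      by (rule sum.neutral) (use True in \<open>auto simp: BtQ_def\<close>)
    then show ?thesis using True by (simp add: BtQ_def)
  next
    case False
    then have "k \<le> m" using Suc by simp
    then show ?thesis using Suc by (simp add: BtQ_def Suc_diff_le)
  qed
qed

lemma arith1: "1 \<le> k \<Longrightarrow> 1 \<le> (x::nat) \<Longrightarrow> k * x - 1 = (k - 1) * x + (x - 1)"
  by (cases k) auto

lemma sum_top_split: "1 \<le> (d::nat) \<Longrightarrow> sum f {1..d} = f d + sum f {1..d-1}"
proof -
  assume "1 \<le> d"
  then have "{1..d} = insert d {1..d-1}" by (auto; arith)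
  then show ?thesis using \<open>1 \<le> d\<close> by simp
qed

lemma colopsA:
  fixes E :: "nat \<Rightarrow> nat \<Rightarrow> complex"
  shows "k \<le> d - 1 \<Longrightarrow> Dt {1..d} (\<lambda>i l. if l \<le> k then E i l - E i (Suc l) else E i l) = Dt {1..d} E"
proof (induction k)
  case 0
  show ?case by (rule Dt_cong) auto
next
  case (Suc k)
  have "Dt {1..d} (\<lambda>i l. if l \<le> Suc k then E i l - E i (Suc l) else E i l)
     = Dt {1..d} (\<lambda>i l. if l = Suc k then (\<lambda>i l. if l \<le> k then E i l - E i (Suc l) else E i l) i (Suc k)
          - (\<lambda>i l. if l \<le> k then E i l - E i (Suc l) else E i l) i (Suc (Suc k))
          else (\<lambda>i l. if l \<le> k then E i l - E i (Suc l) else E i l) i l)"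
    by (rule Dt_cong) auto
  also have "\<dots> = Dt {1..d} (\<lambda>i l. if l \<le> k then E i l - E i (Suc l) else E i l)"
    by (rule Dt_colop) (use Suc.prems in auto)
  also have "\<dots> = Dt {1..d} E" using Suc by simp
  finally show ?case .
qed

lemma colopsB:
  fixes E :: "nat \<Rightarrow> nat \<Rightarrow> complex"
  shows "k \<le> d - 1 \<Longrightarrow> Dt {1..d} (\<lambda>i l. if 2 \<le> l \<and> d - k < l then E i l - E i (l - 1) else E i l) = Dt {1..d} E"
proof (induction k)
  case 0
  show ?case by (rule Dt_cong) auto
next
  case (Suc k)
  let ?m = "\<lambda>i l. if 2 \<le> l \<and> d - k < l then E i l - E i (l - 1) else E i l"
  have "Dt {1..d} (\<lambda>i l. if 2 \<le> l \<and> d - Suc k < l then E i l - E i (l - 1) else E i l)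
     = Dt {1..d} (\<lambda>i l. if l = d - k then ?m i (d - k) - ?m i (d - k - 1) else ?m i l)"
  proof (rule Dt_cong)
    fix i l assume "l \<in> {1..d}"
    show "(if 2 \<le> l \<and> d - Suc k < l then E i l - E i (l - 1) else E i l) =
          (if l = d - k then ?m i (d - k) - ?m i (d - k - 1) else ?m i l)"
      using Suc.prems by (cases "l = d - k") auto
  qed
  also have "\<dots> = Dt {1..d} ?m"
    by (rule Dt_colop) (use Suc.prems in auto)
  also have "\<dots> = Dt {1..d} E" using Suc by simp
  finally show ?case .
qed


lemma P2_ext:
  assumes "finite K" "box K Bs \<subseteq> box K Bs'" "box K Bt \<subseteq> box K Bt'"
  shows "P2 K Bs' Bt' (\<lambda>i j. if i \<in> box K Bs \<and> j \<in> box K Bt then c i j else 0) s t = P2 K Bs Bt c s t"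
  unfolding P2_def
proof (rule sum.mono_neutral_cong_right[OF finite_box[OF assms(1)] assms(2)])
  show "\<forall>i\<in>box K Bs' - box K Bs. (\<Sum>j\<in>box K Bt'. (if i \<in> box K Bs \<and> j \<in> box K Bt then c i j else 0) *
        (\<Prod>k\<in>K. s k ^ i k) * (\<Prod>k\<in>K. t k ^ j k)) = 0" by simp
  fix i assume i: "i \<in> box K Bs"
  show "(\<Sum>j\<in>box K Bt'. (if i \<in> box K Bs \<and> j \<in> box K Bt then c i j else 0) *
        (\<Prod>k\<in>K. s k ^ i k) * (\<Prod>k\<in>K. t k ^ j k)) =
        (\<Sum>j\<in>box K Bt. c i j * (\<Prod>k\<in>K. s k ^ i k) * (\<Prod>k\<in>K. t k ^ j k))"
    by (rule sum.mono_neutral_cong_right[OF finite_box[OF assms(1)] assms(3)]) (use i in auto)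
qed

lemma min_arg:
  assumes "finite K" "is2 K Bs1 Bt1 f" "is2 K Bs2 Bt2 g"
    "\<And>k. k \<in> K \<Longrightarrow> Bs1 k \<le> Bs2 k" "\<And>k. k \<in> K \<Longrightarrow> Bt2 k \<le> Bt1 k"
    "\<And>k. k \<in> K \<Longrightarrow> infinite (As k)" "\<And>k. k \<in> K \<Longrightarrow> infinite (At k)"
    "\<And>s t. (\<And>k. k \<in> K \<Longrightarrow> s k \<in> As k) \<Longrightarrow> (\<And>k. k \<in> K \<Longrightarrow> t k \<in> At k) \<Longrightarrow> f s t = g s t"
  shows "\<exists>c. \<forall>s t. f s t = P2 K Bs1 Bt2 c s t"
proof -
  obtain c1 where c1: "\<And>s t. f s t = P2 K Bs1 Bt1 c1 s t" using assms(2) unfolding is2_def by blast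
  obtain c2 where c2: "\<And>s t. g s t = P2 K Bs2 Bt2 c2 s t" using assms(3) unfolding is2_def by blast
  have s12: "box K Bs1 \<subseteq> box K Bs2" by (rule box_mono) (use assms(4) in auto)
  have t21: "box K Bt2 \<subseteq> box K Bt1" by (rule box_mono) (use assms(5) in auto)
  define e1 where "e1 = (\<lambda>i j. if i \<in> box K Bs1 \<and> j \<in> box K Bt1 then c1 i j else 0)"
  define e2 where "e2 = (\<lambda>i j. if i \<in> box K Bs2 \<and> j \<in> box K Bt2 then c2 i j else 0)"
  have f1: "f s t = P2 K Bs2 Bt1 e1 s t" for s t
    unfolding c1 e1_def by (rule P2_ext[symmetric, OF assms(1) s12]) simp
  have g1: "g s t = P2 K Bs2 Bt1 e2 s t" for s t
    unfolding c2 e2_def by (rule P2_ext[symmetric, OF assms(1) _ t21]) simp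
  have "\<forall>i\<in>box K Bs2. \<forall>j\<in>box K Bt1. (\<lambda>i j. e1 i j - e2 i j) i j = 0"
  proof (rule ident2[OF assms(1,6,7)])
    fix s t assume "\<And>k. k \<in> K \<Longrightarrow> s k \<in> As k" "\<And>k. k \<in> K \<Longrightarrow> t k \<in> At k"
    then have "f s t = g s t" by (rule assms(8))
    then show "P2 K Bs2 Bt1 (\<lambda>i j. e1 i j - e2 i j) s t = 0"
      unfolding f1 g1 P2_def by (simp add: left_diff_distrib sum_subtractf)
  qed auto
  then have z: "c1 i j = 0" if "i \<in> box K Bs1" "j \<in> box K Bt1 - box K Bt2" for i j
  proof -
    have "i \<in> box K Bs2" using that s12 by auto
    then have "e1 i j - e2 i j = 0" using \<open>\<forall>i\<in>box K Bs2. _\<close> that by auto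
    then show ?thesis using that unfolding e1_def e2_def by auto
  qed
  show ?thesis
  proof (intro exI allI)
    fix s t
    show "f s t = P2 K Bs1 Bt2 c1 s t"
      unfolding c1 P2_def
      by (intro sum.cong refl sum.mono_neutral_right finite_box assms(1) t21) (use z in auto)
  qed
qed


lemma exists_rc:
  assumes d2: "d \<ge> 2" and tau1: "\<forall>k\<in>{1..d-1}. tau k \<ge> 1"
  shows "\<exists>a. \<forall>s t. tensor_det d tau Pc s t xd r c = (\<Prod>k\<in>{1..d-1}. s k - t k) *
            P2 {1..d-1} (\<lambda>k. k * tau k - 1) (\<lambda>k. (d - k) * tau k - 1) a s t"
proof -
  let ?K = "{1..d-1}"
  let ?S = "{1..d}"
  define C where "C i = (\<lambda>e. Pc i e (r i) (c i))" for i
  define E where "E i l s t = Ev d tau xd (C i) l s t" for i l s t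
  have td: "tensor_det d tau Pc s t xd r c = Dt ?S (\<lambda>i l. E i l s t)" for s t
    unfolding tensor_det_def Dt_def E_def Ev_def mpoly_eval_def C_def ..
  define qA where "qA i l s t = (if l < d then Qv d tau xd (C i) l s t else E i l s t)" for i l s t
  define qB where "qB i l s t = (if 2 \<le> l then - Qv d tau xd (C i) (l - 1) s t else E i l s t)" for i l s t
  have d1: "1 \<le> d" using d2 by simp
  have pA: "tensor_det d tau Pc s t xd r c = (\<Prod>k\<in>?K. s k - t k) * Dt ?S (\<lambda>i l. qA i l s t)" for s t
  proof -
    have "Dt ?S (\<lambda>i l. E i l s t) = Dt ?S (\<lambda>i l. if l \<le> d - 1 then E i l s t - E i (Suc l) s t else E i l s t)"
      by (rule colopsA[symmetric]) simp
    also have "\<dots> = (\<Prod>l\<in>?S. if l < d then s l - t l else 1) * Dt ?S (\<lambda>i l. qA i l s t)"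
    proof (rule Dt_scale)
      fix i l assume l: "l \<in> ?S"
      show "(if l \<le> d - 1 then E i l s t - E i (Suc l) s t else E i l s t) = (if l < d then s l - t l else 1) * qA i l s t"
        using Ev_diff[of l d tau xd "C i" s t] l unfolding qA_def E_def by auto
    qed simp
    also have "(\<Prod>l\<in>?S. if l < d then s l - t l else 1) = (\<Prod>k\<in>?K. s k - t k)"
    proof -
      have "(\<Prod>l\<in>?K. if l < d then s l - t l else 1) = (\<Prod>k\<in>?K. s k - t k)"
        by (rule prod.cong) auto
      then show ?thesis using prod_top_split[OF d1, of "\<lambda>l. if l < d then s l - t l else 1"] by simp
    qed
    finally show ?thesis using td by simp
  qed
  have pB: "tensor_det d tau Pc s t xd r c = (\<Prod>k\<in>?K. s k - t k) * Dt ?S (\<lambda>i l. qB i l s t)" for s t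
  proof -
    have "Dt ?S (\<lambda>i l. E i l s t) = Dt ?S (\<lambda>i l. if 2 \<le> l \<and> d - (d - 1) < l then E i l s t - E i (l - 1) s t else E i l s t)"
      by (rule colopsB[symmetric]) simp
    also have "\<dots> = (\<Prod>l\<in>?S. if 2 \<le> l then s (l - 1) - t (l - 1) else 1) * Dt ?S (\<lambda>i l. qB i l s t)"
    proof (rule Dt_scale)
      fix i l assume l: "l \<in> ?S"
      show "(if 2 \<le> l \<and> d - (d - 1) < l then E i l s t - E i (l - 1) s t else E i l s t)
          = (if 2 \<le> l then s (l - 1) - t (l - 1) else 1) * qB i l s t"
      proof (cases "2 \<le> l")
        case True
        have "E i (l - 1) s t - E i (Suc (l - 1)) s t = (s (l - 1) - t (l - 1)) * Qv d tau xd (C i) (l - 1) s t"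
          unfolding E_def by (rule Ev_diff) (use True l in auto)
        moreover have "Suc (l - 1) = l" using True by simp
        ultimately show ?thesis using True d2 unfolding qB_def by (simp add: algebra_simps)
      next
        case False
        then show ?thesis unfolding qB_def by simp
      qed
    qed simp
    also have "(\<Prod>l\<in>?S. if 2 \<le> l then s (l - 1) - t (l - 1) else 1) = (\<Prod>k\<in>?K. s k - t k)"
    proof -
      have "(\<Prod>l\<in>?S. if 2 \<le> l then s (l - 1) - t (l - 1) else 1)
          = (if 2 \<le> (1::nat) then s (1 - 1) - t (1 - 1) else 1) * (\<Prod>l\<in>{Suc 1..Suc (d - 1)}. if 2 \<le> l then s (l - 1) - t (l - 1) else 1)"
        using prod.atLeast_Suc_atMost[OF d1, of "\<lambda>l. if 2 \<le> l then s (l - 1) - t (l - 1) else 1"] d1 by simp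
      also have "\<dots> = (\<Prod>k\<in>?K. s k - t k)"
        unfolding prod.shift_bounds_cl_Suc_ivl by simp
      finally show ?thesis .
    qed
    finally show ?thesis using td by simp
  qed
  define BsA where "BsA l = (if l < d then BsQ tau l else BsE tau l)" for l
  define BtA where "BtA l = (if l < d then BtQ tau l else BtE tau l)" for l
  define BsB where "BsB l = (if 2 \<le> l then BsQ tau (l - 1) else BsE tau l)" for l
  define BtB where "BtB l = (if 2 \<le> l then BtQ tau (l - 1) else BtE tau l)" for l
  have colA: "is2 ?K (BsA l) (BtA l) (qA i l)" if "l \<in> ?S" for i l
  proof (cases "l < d")
    case True
    then show ?thesis using Qv_is2[of l d tau xd "C i"] that
      unfolding BsA_def BtA_def qA_def by (auto intro: is2_cong)
  next
    case False
    then show ?thesis using Ev_is2[of l d tau xd "C i"] that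
      unfolding BsA_def BtA_def qA_def E_def by (auto intro: is2_cong)
  qed
  have colB: "is2 ?K (BsB l) (BtB l) (qB i l)" if "l \<in> ?S" for i l
  proof (cases "2 \<le> l")
    case True
    have "is2 ?K (BsQ tau (l - 1)) (BtQ tau (l - 1)) (\<lambda>s t. (-1) * Qv d tau xd (C i) (l - 1) s t)"
      by (rule is2_smult, rule Qv_is2) (use True that in auto)
    then show ?thesis using True
      unfolding BsB_def BtB_def qB_def by (auto intro: is2_cong)
  next
    case False
    then have "l = 1" using that by auto
    then show ?thesis using Ev_is2[of 1 d tau xd "C i"] d1
      unfolding BsB_def BtB_def qB_def E_def by (auto intro: is2_cong)
  qed
  have fA: "is2 ?K (\<lambda>k. \<Sum>l\<in>?S. BsA l k) (\<lambda>k. \<Sum>l\<in>?S. BtA l k) (\<lambda>s t. Dt ?S (\<lambda>i l. qA i l s t))"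
    by (rule Dt_is2) (use colA in auto)
  have fB: "is2 ?K (\<lambda>k. \<Sum>l\<in>?S. BsB l k) (\<lambda>k. \<Sum>l\<in>?S. BtB l k) (\<lambda>s t. Dt ?S (\<lambda>i l. qB i l s t))"
    by (rule Dt_is2) (use colB in auto)
  have sK: "(\<Sum>l\<in>?K. BsA l k) = (\<Sum>l\<in>?K. BsQ tau l k)" "(\<Sum>l\<in>?K. BtA l k) = (\<Sum>l\<in>?K. BtQ tau l k)" for k
    unfolding BsA_def BtA_def by (rule sum.cong; auto)+
  have sB: "(\<Sum>l\<in>?S. BsB l k) = BsE tau 1 k + (\<Sum>l\<in>?K. BsQ tau l k)"
           "(\<Sum>l\<in>?S. BtB l k) = BtE tau 1 k + (\<Sum>l\<in>?K. BtQ tau l k)" for k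
  proof -
    have "(\<Sum>l\<in>?S. BsB l k) = BsB 1 k + (\<Sum>l\<in>{Suc 1..Suc (d - 1)}. BsB l k)"
      using sum.atLeast_Suc_atMost[OF d1, of "\<lambda>l. BsB l k"] d1 by simp
    then show "(\<Sum>l\<in>?S. BsB l k) = BsE tau 1 k + (\<Sum>l\<in>?K. BsQ tau l k)"
      unfolding sum.shift_bounds_cl_Suc_ivl by (simp add: BsB_def)
    have "(\<Sum>l\<in>?S. BtB l k) = BtB 1 k + (\<Sum>l\<in>{Suc 1..Suc (d - 1)}. BtB l k)"
      using sum.atLeast_Suc_atMost[OF d1, of "\<lambda>l. BtB l k"] d1 by simp
    then show "(\<Sum>l\<in>?S. BtB l k) = BtE tau 1 k + (\<Sum>l\<in>?K. BtQ tau l k)"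
      unfolding sum.shift_bounds_cl_Suc_ivl by (simp add: BtB_def)
  qed
  have ar: "k * tau k - 1 = (k - 1) * tau k + (tau k - 1)" "(d - k) * tau k - 1 = (d - 1 - k) * tau k + (tau k - 1)"
    if "k \<in> ?K" for k
  proof -
    have t: "1 \<le> tau k" using tau1 that by auto
    show "k * tau k - 1 = (k - 1) * tau k + (tau k - 1)" using arith1[OF _ t, of k] that by auto
    show "(d - k) * tau k - 1 = (d - 1 - k) * tau k + (tau k - 1)" using arith1[OF _ t, of "d - k"] that by auto
  qed
  have fA': "is2 ?K (\<lambda>k. k * tau k - 1) (\<lambda>k. ((d - k) * tau k - 1) + tau k) (\<lambda>s t. Dt ?S (\<lambda>i l. qA i l s t))"
  proof (rule is2_mono[OF _ fA])
    fix k assume k: "k \<in> ?K"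
    show "(\<Sum>l\<in>?S. BsA l k) \<le> k * tau k - 1"
      using sum_top_split[OF d1, of "\<lambda>l. BsA l k"] sK(1)[of k] sumA[of k "d - 1" tau] k ar(1)[OF k]
      by (auto simp: BsA_def BsE_def)
    show "(\<Sum>l\<in>?S. BtA l k) \<le> ((d - k) * tau k - 1) + tau k"
      using sum_top_split[OF d1, of "\<lambda>l. BtA l k"] sK(2)[of k] sumB[of k "d - 1" tau] k ar(2)[OF k]
      by (auto simp: BtA_def BtE_def)
  qed simp
  have fB': "is2 ?K (\<lambda>k. (k * tau k - 1) + tau k) (\<lambda>k. (d - k) * tau k - 1) (\<lambda>s t. Dt ?S (\<lambda>i l. qB i l s t))"
  proof (rule is2_mono[OF _ fB])
    fix k assume k: "k \<in> ?K"
    show "(\<Sum>l\<in>?S. BsB l k) \<le> (k * tau k - 1) + tau k"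
      using sB(1)[of k] sumA[of k "d - 1" tau] k ar(1)[OF k]
      by (auto simp: BsE_def)
    show "(\<Sum>l\<in>?S. BtB l k) \<le> (d - k) * tau k - 1"
      using sB(2)[of k] sumB[of k "d - 1" tau] k ar(2)[OF k]
      by (auto simp: BtE_def)
  qed simp
  let ?As = "\<lambda>k::nat. range (of_nat :: nat \<Rightarrow> complex)"
  let ?At = "\<lambda>k::nat. range (\<lambda>m::nat. - (of_nat (Suc m) :: complex))"
  have infA: "infinite (?As k)" for k
    by (rule range_inj_infinite) (simp add: inj_on_def)
  have infT: "infinite (?At k)" for k
    by (rule range_inj_infinite) (simp add: inj_on_def)
  have nz: "(\<Prod>k\<in>?K. s k - t k) \<noteq> 0" if "\<And>k. k \<in> ?K \<Longrightarrow> s k \<in> ?As k" "\<And>k. k \<in> ?K \<Longrightarrow> t k \<in> ?At k" for s t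
  proof -
    have "s k - t k \<noteq> 0" if k: "k \<in> ?K" for k
    proof -
      obtain a where a: "s k = of_nat a" using \<open>\<And>k. k \<in> ?K \<Longrightarrow> s k \<in> ?As k\<close>[OF k] by auto
      obtain b where b: "t k = - of_nat (Suc b)" using \<open>\<And>k. k \<in> ?K \<Longrightarrow> t k \<in> ?At k\<close>[OF k] by auto
      have "s k - t k = of_nat (a + Suc b)" unfolding a b by simp
      then show ?thesis by (simp only: of_nat_eq_0_iff)
    qed
    then show ?thesis by (simp add: prod_zero_iff)
  qed
  have "\<exists>a. \<forall>s t. Dt ?S (\<lambda>i l. qA i l s t) = P2 ?K (\<lambda>k. k * tau k - 1) (\<lambda>k. (d - k) * tau k - 1) a s t"
  proof (rule min_arg[OF _ fA' fB' _ _ infA infT])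
    fix s t assume hs: "\<And>k. k \<in> ?K \<Longrightarrow> s k \<in> ?As k" and ht: "\<And>k. k \<in> ?K \<Longrightarrow> t k \<in> ?At k"
    have n: "(\<Prod>k\<in>?K. s k - t k) \<noteq> 0" by (rule nz) (use hs ht in blast)+
    have "(\<Prod>k\<in>?K. s k - t k) * Dt ?S (\<lambda>i l. qA i l s t) = (\<Prod>k\<in>?K. s k - t k) * Dt ?S (\<lambda>i l. qB i l s t)"
      using trans[OF sym[OF pA[of s t]] pB[of s t]] .
    then show "Dt ?S (\<lambda>i l. qA i l s t) = Dt ?S (\<lambda>i l. qB i l s t)" using n by simp
  qed simp_all
  then obtain a where a: "\<And>s t. Dt ?S (\<lambda>i l. qA i l s t) = P2 ?K (\<lambda>k. k * tau k - 1) (\<lambda>k. (d - k) * tau k - 1) a s t"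
    by blast
  show ?thesis
  proof (intro exI allI)
    fix s t
    show "tensor_det d tau Pc s t xd r c = (\<Prod>k\<in>?K. s k - t k) *
            P2 ?K (\<lambda>k. k * tau k - 1) (\<lambda>k. (d - k) * tau k - 1) a s t"
      unfolding pA a ..
  qed
qed


lemma mpoly_eval_cong:
  "(\<And>k. k \<in> {1..d} \<Longrightarrow> x k = y k) \<Longrightarrow> mpoly_eval d tau C x a b = mpoly_eval d tau C y a b"
  unfolding mpoly_eval_def by (intro sum.cong refl arg_cong2[where f="(*)"] prod.cong) auto

lemma eigen_td:
  assumes "\<forall>i\<in>{1..d}. \<forall>a<n i. (\<Sum>b<n i. mpoly_eval d tau (Pc i) xs a b * vs i b) = 0"
    and r: "r \<in> kidx d n" and d1: "1 \<le> d"
  shows "(\<Sum>c\<in>kidx d n. tensor_det d tau Pc xs t (xs d) r c * ktensor_vec d vs c) = 0"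
proof -
  let ?S = "{1..d}"
  define M where "M i j a b = mpoly_eval d tau (Pc i) (dixon_arg d j xs t (xs d)) a b" for i j a b
  have "(\<Sum>c\<in>kidx d n. tensor_det d tau Pc xs t (xs d) r c * ktensor_vec d vs c)
      = (\<Sum>c\<in>kidx d n. \<Sum>\<sigma>\<in>{\<sigma>. \<sigma> permutes ?S}. of_int (sign \<sigma>) * (\<Prod>i\<in>?S. M i (\<sigma> i) (r i) (c i) * vs i (c i)))"
    unfolding tensor_det_def ktensor_vec_def M_def
    by (simp add: sum_distrib_right prod.distrib mult.assoc)
  also have "\<dots> = (\<Sum>\<sigma>\<in>{\<sigma>. \<sigma> permutes ?S}. of_int (sign \<sigma>) * (\<Sum>c\<in>kidx d n. \<Prod>i\<in>?S. M i (\<sigma> i) (r i) (c i) * vs i (c i)))"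
    by (subst sum.swap) (simp add: sum_distrib_left)
  also have "\<dots> = (\<Sum>\<sigma>\<in>{\<sigma>. \<sigma> permutes ?S}. of_int (sign \<sigma>) * (\<Prod>i\<in>?S. \<Sum>b<n i. M i (\<sigma> i) (r i) b * vs i b))"
    unfolding kidx_def by (subst prod_sum_PiE) auto
  also have "\<dots> = 0"
  proof (rule sum.neutral, intro ballI)
    fix \<sigma> assume "\<sigma> \<in> {\<sigma>. \<sigma> permutes ?S}"
    then have p: "\<sigma> permutes ?S" by simp
    define i0 where "i0 = inv \<sigma> 1"
    have i0S: "i0 \<in> ?S" unfolding i0_def using permutes_in_image[OF permutes_inv[OF p], of 1] d1
      by auto
    have si0: "\<sigma> i0 = 1" unfolding i0_def using permutes_inverses[OF p] by simp
    have ri0: "r i0 < n i0" using r i0S unfolding kidx_def by (auto simp: PiE_iff)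
    have "(\<Sum>b<n i0. M i0 (\<sigma> i0) (r i0) b * vs i0 b) = (\<Sum>b<n i0. mpoly_eval d tau (Pc i0) xs (r i0) b * vs i0 b)"
      unfolding si0 M_def
      by (intro sum.cong refl arg_cong2[where f="(*)"] mpoly_eval_cong) (auto simp: dixon_arg_def)
    also have "\<dots> = 0" using assms(1) i0S ri0 by blast
    finally have "(\<Prod>i\<in>?S. \<Sum>b<n i. M i (\<sigma> i) (r i) b * vs i b) = 0"
      using i0S by (intro prod_zero) auto
    then show "of_int (sign \<sigma>) * (\<Prod>i\<in>?S. \<Sum>b<n i. M i (\<sigma> i) (r i) b * vs i b) = 0" by simp
  qed
  finally show ?thesis .
qed


theorem proposition4p2:
  fixes d :: nat and tau :: "nat \<Rightarrow> nat" and n :: "nat \<Rightarrow> nat"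
    and Pc :: "nat \<Rightarrow> (nat \<Rightarrow> nat) \<Rightarrow> nat \<Rightarrow> nat \<Rightarrow> complex"
    and xs :: "nat \<Rightarrow> complex" and vs :: "nat \<Rightarrow> nat \<Rightarrow> complex"
  assumes "d \<ge> 2"
    and "\<forall>k\<in>{1..d-1}. tau k \<ge> 1"
    and "\<forall>i\<in>{1..d}. \<exists>b<n i. vs i b \<noteq> 0"
    and "\<forall>i\<in>{1..d}. \<forall>a<n i. (\<Sum>b<n i. mpoly_eval d tau (Pc i) xs a b * vs i b) = 0"
  defines "V \<equiv> (\<lambda>(i, c). (\<Prod>k\<in>{1..d-1}. xs k ^ i k) * ktensor_vec d vs c)"
  shows "(\<exists>i\<in>s_exps d tau. \<exists>c\<in>kidx d n. V (i, c) \<noteq> 0)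
    \<and> (\<forall>j\<in>t_exps d tau. \<forall>r\<in>kidx d n.
         dixon_mult_vec d tau n (dixon_resultant d tau n Pc (xs d)) V (j, r) = 0)"
proof
  let ?K = "{1..d-1}"
  let ?S = "{1..d}"
  have d1: "1 \<le> d" using assms(1) by simp
  show "\<exists>i\<in>s_exps d tau. \<exists>c\<in>kidx d n. V (i, c) \<noteq> 0"
  proof -
    obtain b where b: "\<forall>i\<in>?S. b i < n i \<and> vs i (b i) \<noteq> 0"
      using bchoice[OF assms(3)] by blast
    have i0: "restrict (\<lambda>k. 0) ?K \<in> s_exps d tau" unfolding s_exps_def by auto
    have c0: "restrict b ?S \<in> kidx d n" unfolding kidx_def using b by auto
    have "ktensor_vec d vs (restrict b ?S) \<noteq> 0"
      unfolding ktensor_vec_def using b by (simp add: prod_zero_iff)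
    then have "V (restrict (\<lambda>k. 0) ?K, restrict b ?S) \<noteq> 0"
      unfolding V_def by simp
    then show ?thesis using i0 c0 by blast
  qed
  let ?BsT = "\<lambda>k. k * tau k - 1"
  let ?BtT = "\<lambda>k. (d - k) * tau k - 1"
  have sbox: "s_exps d tau = box ?K ?BsT" unfolding s_exps_def box_def ..
  have tbox: "t_exps d tau = box ?K ?BtT" unfolding t_exps_def box_def ..
  have "\<forall>p. \<exists>a. \<forall>s t. tensor_det d tau Pc s t (xs d) (fst p) (snd p) = (\<Prod>k\<in>?K. s k - t k) * P2 ?K ?BsT ?BtT a s t"
  proof
    fix p :: "(nat \<Rightarrow> nat) \<times> (nat \<Rightarrow> nat)"
    show "\<exists>a. \<forall>s t. tensor_det d tau Pc s t (xs d) (fst p) (snd p) = (\<Prod>k\<in>?K. s k - t k) * P2 ?K ?BsT ?BtT a s t"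
      by (rule exists_rc[OF assms(1,2)])
  qed
  from choice[OF this] obtain F where F: "\<forall>p. \<forall>s t. tensor_det d tau Pc s t (xs d) (fst p) (snd p) = (\<Prod>k\<in>?K. s k - t k) * P2 ?K ?BsT ?BtT (F p) s t"
    ..
  have ex: "\<exists>A. \<forall>s t. \<forall>r\<in>kidx d n. \<forall>c\<in>kidx d n.
      (\<Prod>k\<in>{1..d-1}. s k - t k) *
      (\<Sum>i\<in>s_exps d tau. \<Sum>j\<in>t_exps d tau.
          A i j r c * (\<Prod>k\<in>{1..d-1}. s k ^ i k) * (\<Prod>k\<in>{1..d-1}. t k ^ j k))
      = tensor_det d tau Pc s t (xs d) r c"
  proof (rule exI[of _ "\<lambda>i j r c. F (r, c) i j"], intro allI ballI)
    fix s t r c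
    show "(\<Prod>k\<in>{1..d-1}. s k - t k) *
      (\<Sum>i\<in>s_exps d tau. \<Sum>j\<in>t_exps d tau.
          F (r, c) i j * (\<Prod>k\<in>{1..d-1}. s k ^ i k) * (\<Prod>k\<in>{1..d-1}. t k ^ j k))
      = tensor_det d tau Pc s t (xs d) r c"
      using spec[OF spec[OF spec[OF F, of "(r, c)"], of s], of t] unfolding P2_def sbox tbox by simp
  qed
  define Aop where "Aop = dixon_coeffs d tau n Pc (xs d)"
  have prp: "\<forall>s t. \<forall>r\<in>kidx d n. \<forall>c\<in>kidx d n.
      (\<Prod>k\<in>{1..d-1}. s k - t k) *
      (\<Sum>i\<in>s_exps d tau. \<Sum>j\<in>t_exps d tau.
          Aop i j r c * (\<Prod>k\<in>{1..d-1}. s k ^ i k) * (\<Prod>k\<in>{1..d-1}. t k ^ j k))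
      = tensor_det d tau Pc s t (xs d) r c"
    unfolding Aop_def dixon_coeffs_def by (rule someI_ex[OF ex])
  show "\<forall>j\<in>t_exps d tau. \<forall>r\<in>kidx d n.
         dixon_mult_vec d tau n (dixon_resultant d tau n Pc (xs d)) V (j, r) = 0"
  proof (intro ballI)
    fix j0 r assume j0: "j0 \<in> t_exps d tau" and r: "r \<in> kidx d n"
    define P where "P i = (\<Prod>k\<in>?K. xs k ^ i k)" for i :: "nat \<Rightarrow> nat"
    define v where "v c = ktensor_vec d vs c" for c
    define g where "g j = (\<Sum>i\<in>s_exps d tau. \<Sum>c\<in>kidx d n. Aop i j r c * (P i * v c))" for j
    have mv: "dixon_mult_vec d tau n (dixon_resultant d tau n Pc (xs d)) V (j0, r) = g j0"
      unfolding dixon_mult_vec_def dixon_resultant_def g_def V_def P_def v_def Aop_def by simp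
    have "\<forall>j\<in>box ?K ?BtT. g j = 0"
    proof (rule ident1[of ?K "\<lambda>k. UNIV - {xs k}"])
      show "finite ?K" by simp
      show "\<And>k. k \<in> ?K \<Longrightarrow> infinite (UNIV - {xs k})"
        by (simp add: infinite_UNIV_char_0)
      fix t assume t: "\<And>k. k \<in> ?K \<Longrightarrow> t k \<in> UNIV - {xs k}"
      define T where "T j = (\<Prod>k\<in>?K. t k ^ j k)" for j :: "nat \<Rightarrow> nat"
      have n0: "(\<Prod>k\<in>?K. xs k - t k) \<noteq> 0"
      proof -
        have "xs k - t k \<noteq> 0" if "k \<in> ?K" for k using t[OF that] by auto
        then show ?thesis by (simp add: prod_zero_iff)
      qed
      have "(\<Prod>k\<in>?K. xs k - t k) * (\<Sum>c\<in>kidx d n. (\<Sum>i\<in>s_exps d tau. \<Sum>j\<in>t_exps d tau. Aop i j r c * P i * T j) * v c)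
          = (\<Sum>c\<in>kidx d n. tensor_det d tau Pc xs t (xs d) r c * ktensor_vec d vs c)"
        unfolding sum_distrib_left v_def
      proof (intro sum.cong refl)
        fix c assume c: "c \<in> kidx d n"
        show "(\<Prod>k\<in>?K. xs k - t k) * ((\<Sum>i\<in>s_exps d tau. \<Sum>j\<in>t_exps d tau. Aop i j r c * P i * T j) * ktensor_vec d vs c)
           = tensor_det d tau Pc xs t (xs d) r c * ktensor_vec d vs c"
          using prp[rule_format, of r c xs t] r c unfolding P_def T_def by (simp add: mult.assoc)
      qed
      also have "\<dots> = 0" by (rule eigen_td[OF assms(4) r d1])
      finally have z: "(\<Sum>c\<in>kidx d n. (\<Sum>i\<in>s_exps d tau. \<Sum>j\<in>t_exps d tau. Aop i j r c * P i * T j) * v c) = 0"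
        using n0 by simp
      have "(\<Sum>c\<in>kidx d n. (\<Sum>i\<in>s_exps d tau. \<Sum>j\<in>t_exps d tau. Aop i j r c * P i * T j) * v c)
          = (\<Sum>c\<in>kidx d n. \<Sum>i\<in>s_exps d tau. \<Sum>j\<in>t_exps d tau. Aop i j r c * P i * T j * v c)"
        by (simp add: sum_distrib_right)
      also have "\<dots> = (\<Sum>i\<in>s_exps d tau. \<Sum>c\<in>kidx d n. \<Sum>j\<in>t_exps d tau. Aop i j r c * P i * T j * v c)"
        by (rule sum.swap)
      also have "\<dots> = (\<Sum>i\<in>s_exps d tau. \<Sum>j\<in>t_exps d tau. \<Sum>c\<in>kidx d n. Aop i j r c * P i * T j * v c)"
        by (intro sum.cong refl sum.swap)
      also have "\<dots> = (\<Sum>j\<in>t_exps d tau. \<Sum>i\<in>s_exps d tau. \<Sum>c\<in>kidx d n. Aop i j r c * P i * T j * v c)"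
        by (rule sum.swap)
      also have "\<dots> = (\<Sum>j\<in>t_exps d tau. g j * T j)"
        unfolding g_def sum_distrib_right by (intro sum.cong refl) (simp add: mult_ac)
      finally show "(\<Sum>j\<in>box ?K ?BtT. g j * (\<Prod>k\<in>?K. t k ^ j k)) = 0"
        using z unfolding tbox T_def by simp
    qed
    then show "dixon_mult_vec d tau n (dixon_resultant d tau n Pc (xs d)) V (j0, r) = 0"
      using mv j0 tbox by simp
  qed
qed

end
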